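(* In the setting of the context, consider a Case 2 spacetime ($\partial_v r_->0$). Radially outgoing null geodesics whose initial position is on or inside the inner AH never intersect the inner AH at any later time, hence stay inside the inner AH, and they satisfy $x(v)\to0$ as $v\to\infty$.
   Context: Spherically symmetric spacetime $ds^2=-f(v,r)A(v,r)^2dv^2+2A(v,r)\,dr\,dv+r^2d\Omega^2$ with $A>0$, $f,A\to1$ as $r\to\infty$, $f(v,0)=1$, $\partial_rf(v,0)=\partial_rA(v,0)=0$; $f(v,\cdot)$ has exactly two zeros $r_+(v)>r_-(v)$ (outer/inner apparent horizons, AHs), $f=F(r-r_+)(r-r_-)$ with $F>0$, and $h=AF>0$. Assumptions: $\partial_v r_+<0$; $r_\pm(v)\to r_c$ as $v\to\infty$; the sign of $\partial_v r_-$ is constant; the $v\to\infty$ limits of $A,F,h$ behave as analytic functions of $r$, so all $\partial_r^n h$ converge as $v\to\infty$. With $x=r-r_c$, $x_\pm=r_\pm-r_c$ and $h$ regarded as a function of $(v,x)$, radially outgoing null geodesics solve $dx/dv=\tfrac12h(v,x)(x-x_+(v))(x-x_-(v))$. *)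

theory Defs
  imports "HOL-Analysis.Analysis"
begin

end

theory Submission
  imports Defs
begin

lemma deriv_at_of_within:
  fixes f :: "real \<Rightarrow> real"
  assumes "(f has_real_derivative D) (at t within {v0..})" "t > v0"
  shows "(f has_real_derivative D) (at t)"
proof -
  have "(f has_real_derivative D) (at t within {v0<..})"
    by (rule has_field_derivative_subset[OF assms(1)]) (simp add: subset_eq)
  moreover have "at t within {v0<..} = at t"
    using assms(2) by (intro at_within_open) auto
  ultimately show ?thesis by simp
qed

theorem lemma4:
  fixes h :: "real \<Rightarrow> real \<Rightarrow> real"
    and hinf :: "real \<Rightarrow> real"
    and xp xm xp' xm' :: "real \<Rightarrow> real"
    and x :: "real \<Rightarrow> real"
    and v0 :: real
  assumes h_cont: "continuous_on UNIV (\<lambda>(v, y). h v y)"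
    and h_pos: "\<And>v y. h v y > 0"
    and h_lim: "\<And>K. compact K \<Longrightarrow> uniform_limit K (\<lambda>v y. h v y) hinf at_top"
    and hinf_cont: "continuous_on UNIV hinf"
    and hinf_pos: "\<And>y. hinf y > 0"
    and xp_deriv: "\<And>v. (xp has_real_derivative xp' v) (at v)"
    and xm_deriv: "\<And>v. (xm has_real_derivative xm' v) (at v)"
    and xp_decr: "\<And>v. xp' v < 0"
    and case2: "\<And>v. xm' v > 0"
    and order: "\<And>v. xm v < xp v"
    and xp_lim: "(xp \<longlongrightarrow> 0) at_top"
    and xm_lim: "(xm \<longlongrightarrow> 0) at_top"
    and geod: "\<And>v. v \<ge> v0 \<Longrightarrow>
       (x has_real_derivative (1/2) * h v (x v) * (x v - xp v) * (x v - xm v)) (at v within {v0..})"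
    and init: "x v0 \<le> xm v0"
  shows "(\<forall>v>v0. x v < xm v) \<and> (x \<longlongrightarrow> 0) at_top"
proof -
  define G where "G v = (1/2) * h v (x v) * (x v - xp v) * (x v - xm v)" for v
  define g where "g v = x v - xm v" for v
  have gd: "(g has_real_derivative G v - xm' v) (at v within {v0..})" if "v \<ge> v0" for v
    unfolding g_def G_def
    by (intro DERIV_diff geod that has_field_derivative_at_within[OF xm_deriv])
  have xcont: "continuous_on {v0..} x"
    unfolding continuous_on_eq_continuous_within
    using geod DERIV_continuous by blast
  have xmcont: "continuous_on A xm" for A
    using xm_deriv DERIV_isCont continuous_at_imp_continuous_on by blast
  have gcont: "continuous_on {v0..} g"
    unfolding g_def by (intro continuous_intros xcont xmcont)
  have gz: "G t - xm' t < 0" if "g t = 0" for t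
    using that case2[of t] unfolding G_def g_def by simp
  have P: "\<not> g b > 0" if bv0: "b > v0" for b
  proof
    assume gb: "g b > 0"
    define Z where "Z = {t \<in> {v0..b}. g t = 0}"
    have cb: "continuous_on {v0..b} g" using gcont by (rule continuous_on_subset) auto
    have closedZ: "closed Z" unfolding Z_def
      by (rule continuous_closed_preimage_constant[OF cb]) auto
    have "g v0 \<le> 0" using init unfolding g_def by simp
    then obtain z where z: "v0 \<le> z" "z \<le> b" "g z = 0"
      using IVT'[of g v0 0 b, OF _ _ _ cb] gb less_imp_le[OF bv0] by auto
    hence Zne: "Z \<noteq> {}" unfolding Z_def by auto
    have Zbdd: "bdd_above Z" unfolding Z_def by (rule bdd_aboveI[of _ b]) auto
    define s where "s = Sup Z"
    have sZ: "s \<in> Z" unfolding s_def using closed_contains_Sup[OF Zne Zbdd closedZ] .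
    hence s: "v0 \<le> s" "s \<le> b" "g s = 0" unfolding Z_def by auto
    hence "s < b" using gb by (cases "s = b") auto
    obtain d where d: "d > 0" "\<forall>h>0. s + h \<in> {v0..} \<longrightarrow> h < d \<longrightarrow> g s > g (s + h)"
      using has_real_derivative_neg_dec_right[OF gd[OF s(1)] gz[OF s(3)]] by blast
    define hh where "hh = min (d/2) ((b - s)/2)"
    have hh: "hh > 0" "hh < d" "s + hh < b" using d(1) \<open>s < b\<close> unfolding hh_def by (auto simp: min_def field_simps)
    have "g (s + hh) < 0" using d(2) hh s by auto
    moreover have cb2: "continuous_on {s+hh..b} g" using gcont by (rule continuous_on_subset) (use s hh in auto)
    ultimately obtain z' where z': "s + hh \<le> z'" "z' \<le> b" "g z' = 0"
      using IVT'[of g "s+hh" 0 b, OF _ _ _ cb2] gb hh by auto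
    hence "z' \<in> Z" unfolding Z_def using s hh by auto
    hence "z' \<le> s" unfolding s_def using Zbdd by (rule cSup_upper)
    thus False using z' hh by auto
  qed
  have part1: "\<forall>v>v0. x v < xm v"
  proof (intro allI impI)
    fix b assume b: "b > v0"
    show "x b < xm b"
    proof (rule ccontr)
      assume "\<not> x b < xm b"
      hence "g b = 0" using P[OF b] unfolding g_def by auto
      then obtain d where d: "d > 0" "\<forall>h>0. b - h \<in> {v0..} \<longrightarrow> h < d \<longrightarrow> g b < g (b - h)"
        using has_real_derivative_neg_dec_left[OF gd[OF less_imp_le[OF b]] gz[OF \<open>g b = 0\<close>]] by blast
      define hh where "hh = min (d/2) ((b - v0)/2)"
      have hh: "hh > 0" "hh < d" "b - hh > v0" using d(1) b unfolding hh_def by (auto simp: min_def field_simps)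
      have "g (b - hh) > 0" using d(2) hh \<open>g b = 0\<close> by auto
      thus False using P[OF hh(3)] by simp
    qed
  qed
  have Gnn: "G t \<ge> 0" if "t > v0" for t
  proof -
    have "x t - xp t \<le> 0" "x t - xm t \<le> 0" using part1 that order[of t] by (auto simp: less_imp_le)
    hence "(x t - xp t) * (x t - xm t) \<ge> 0" by (simp add: zero_le_mult_iff)
    moreover have "h t (x t) > 0" by (rule h_pos)
    moreover have "G t = (1/2) * h t (x t) * ((x t - xp t) * (x t - xm t))" unfolding G_def by simp
    ultimately have "0 \<le> h t (x t) * ((x t - xp t) * (x t - xm t))" "G t = (1/2) * h t (x t) * ((x t - xp t) * (x t - xm t))"
      by (auto intro!: mult_nonneg_nonneg)
    thus ?thesis by simp
  qed
  have xDat: "(x has_real_derivative G t) (at t)" if "t > v0" for t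
    using deriv_at_of_within[OF geod[of t] that] that unfolding G_def by auto
  have xmono: "x a \<le> x b" if "v0 \<le> a" "a \<le> b" for a b
  proof (rule DERIV_nonneg_imp_increasing_open[OF that(2)])
    show "continuous_on {a..b} x" using xcont by (rule continuous_on_subset) (use that in auto)
    fix t assume "a < t" "t < b"
    thus "\<exists>y. DERIV x t :> y \<and> 0 \<le> y" using xDat Gnn that by (intro exI[of _ "G t"]) auto
  qed
  have xmle: "xm v \<le> 0" for v
  proof -
    have mono': "xm v \<le> xm w" if "v \<le> w" for w
    proof (rule DERIV_nonneg_imp_increasing_open[OF that _ xmcont])
      fix t show "\<exists>y. DERIV xm t :> y \<and> 0 \<le> y" using xm_deriv case2 less_imp_le by blast
    qed
    have "eventually (\<lambda>w. xm v \<le> xm w) at_top"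
      by (rule eventually_mono[OF eventually_ge_at_top[of v] mono'])
    thus ?thesis using tendsto_lowerbound[OF xm_lim] by simp
  qed
  have upper: "eventually (\<lambda>v. x v < a) at_top" if "a > 0" for a
  proof -
    have "eventually (\<lambda>v. xm v < a) at_top" using order_tendstoD(2)[OF xm_lim that] .
    moreover have "eventually (\<lambda>v. v > v0) at_top" by (rule eventually_gt_at_top)
    ultimately show ?thesis
      by eventually_elim (metis part1 less_trans)
  qed
  have lower: "eventually (\<lambda>v. a < x v) at_top" if a0: "a < 0" for a
  proof (cases "\<exists>w\<ge>v0. x w > a")
    case True
    then obtain w where w: "w \<ge> v0" "x w > a" by auto
    show ?thesis using eventually_ge_at_top[of w]
      by (rule eventually_mono) (metis xmono w(1) w(2) less_le_trans)
  next
    case False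
    hence xa: "x v \<le> a" if "v \<ge> v0" for v using that not_le by blast
    define K where "K = {x v0..0}"
    have xK: "x v \<in> K" if "v \<ge> v0" for v
      using xmono[OF order_refl that] xa[OF that] that a0 unfolding K_def by auto
    have Kne: "K \<noteq> {}" using xK[of v0] by auto
    obtain y0 where y0: "y0 \<in> K" "\<forall>y\<in>K. hinf y0 \<le> hinf y"
      using continuous_attains_inf[OF _ Kne continuous_on_subset[OF hinf_cont]] unfolding K_def by auto
    define c where "c = hinf y0"
    have c: "c > 0" unfolding c_def by (rule hinf_pos)
    define e where "e = -a"
    have e: "e > 0" using a0 unfolding e_def by simp
    have ev1: "\<forall>\<^sub>F v in at_top. \<forall>y\<in>K. dist (h v y) (hinf y) < c/2"
      using uniform_limitD[OF h_lim[of K], of "c/2"] c unfolding K_def by simp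
    have ev2: "\<forall>\<^sub>F v in at_top. xp v > a/2" using order_tendstoD(1)[OF xp_lim, of "a/2"] a0 by simp
    have ev3: "\<forall>\<^sub>F v in at_top. xm v > a/2" using order_tendstoD(1)[OF xm_lim, of "a/2"] a0 by simp
    have "\<forall>\<^sub>F v in at_top. (\<forall>y\<in>K. dist (h v y) (hinf y) < c/2) \<and> xp v > a/2 \<and> xm v > a/2 \<and> v \<ge> v0 + 1"
      using ev1 ev2 ev3 eventually_ge_at_top[of "v0+1"] by (intro eventually_conj) auto
    then obtain V where V: "\<And>v. v \<ge> V \<Longrightarrow> (\<forall>y\<in>K. dist (h v y) (hinf y) < c/2) \<and> xp v > a/2 \<and> xm v > a/2 \<and> v \<ge> v0 + 1"
      unfolding eventually_at_top_linorder by blast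
    define \<delta> where "\<delta> = (1/2) * ((c/2) * (e/2) * (e/2))"
    have \<delta>: "\<delta> > 0" unfolding \<delta>_def using c e by simp
    have GV: "G t \<ge> \<delta>" if "t \<ge> V" for t
    proof -
      from V[OF that] have A: "\<forall>y\<in>K. dist (h t y) (hinf y) < c/2" "xp t > a/2" "xm t > a/2" "t \<ge> v0 + 1"
        by auto
      have tv: "t \<ge> v0" using A(4) by simp
      have "dist (h t (x t)) (hinf (x t)) < c/2" using A(1) xK[OF tv] by auto
      moreover have "hinf (x t) \<ge> c" using y0 xK[OF tv] unfolding c_def by auto
      ultimately have hh: "h t (x t) \<ge> c/2" by (simp only: dist_real_def abs_less_iff) linarith
      have p: "xp t - x t \<ge> e/2" "xm t - x t \<ge> e/2" using A xa[OF tv] unfolding e_def by auto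
      have "(c/2) * (e/2) \<le> h t (x t) * (xp t - x t)"
        using hh p c e by (intro mult_mono) auto
      moreover have "0 \<le> h t (x t) * (xp t - x t)"
        using h_pos[of t "x t"] p e by simp
      ultimately have "(c/2) * (e/2) * (e/2) \<le> h t (x t) * (xp t - x t) * (xm t - x t)"
        using p c e by (intro mult_mono[of "(c/2) * (e/2)"]) auto
      moreover have "G t = (1/2) * (h t (x t) * (xp t - x t) * (xm t - x t))"
      proof -
        have "(x t - xp t) * (x t - xm t) = (xp t - x t) * (xm t - x t)"
          by (metis minus_diff_eq minus_mult_minus)
        thus ?thesis unfolding G_def by (metis mult.assoc)
      qed
      ultimately show ?thesis unfolding \<delta>_def by simp
    qed
    have Vv: "V \<ge> v0 + 1" using V[of V] by simp
    define w where "w = V + (- x V) / \<delta> + 1"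
    have xV: "x V \<le> a" using xa Vv by simp
    have wV: "w \<ge> V" unfolding w_def using xV a0 \<delta> by (simp add: field_simps)
    have "x V - \<delta> * V \<le> x w - \<delta> * w"
    proof (rule DERIV_nonneg_imp_increasing_open[OF wV])
      have "continuous_on {V..w} x" using xcont by (rule continuous_on_subset) (use Vv in auto)
      then show "continuous_on {V..w} (\<lambda>t. x t - \<delta> * t)"
        by (intro continuous_intros)
      fix t assume t: "V < t" "t < w"
      hence "t > v0" using Vv by simp
      show "\<exists>y. ((\<lambda>t. x t - \<delta> * t) has_real_derivative y) (at t) \<and> 0 \<le> y"
        using GV[of t] t by (intro exI[of _ "G t - \<delta>"]) (auto intro!: derivative_eq_intros xDat[OF \<open>t > v0\<close>])
    qed
    hence "x w \<ge> x V + \<delta> * (w - V)" by (simp add: algebra_simps)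
    also have "\<delta> * (w - V) = - x V + \<delta>" unfolding w_def using \<delta> by (simp add: field_simps)
    finally have "x w > 0" using \<delta> by simp
    moreover have "x w \<le> a" using xa wV Vv by simp
    ultimately show ?thesis using a0 by simp
  qed
  have "(x \<longlongrightarrow> 0) at_top"
    by (rule order_tendstoI) (use upper lower in auto)
  with part1 show ?thesis by blast
qed

end
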